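(* Fix $H\in\mathbb{R}$ and consider the framed curvature flow with $\theta$-velocity $$\upsilon_\theta=\kappa H-(\kappa\,\partial_s\psi_3+2\,\partial_s\kappa\,\psi_3)\kappa^{-2}\psi_1+(\kappa^3+\kappa\psi_3^2-\partial_s^2\kappa)\kappa^{-2}\psi_2 .$$ Then the trajectory surface $\Sigma_{\underline t}$ generated by this flow has constant mean curvature equal to $H$.
   Context: $S^1=\mathbb{R}/2\pi\mathbb{Z}$; closed curves $\Gamma_t$ parametrized by $\gamma(t,\cdot):S^1\to\mathbb{R}^3$, $g=\|\partial_u\gamma\|$, $ds=g\,du$, $\partial_s=g^{-1}\partial_u$; Frenet frame $T,N,B$, curvature $\kappa$ (assumed positive where the formulas are used), torsion $\tau$. For an angle function $\theta$: $\nu_\theta=\cos\theta N+\sin\theta B$, $\beta_\theta=T\times\nu_\theta$, $\psi_1=\kappa\cos\theta$, $\psi_2=\kappa\sin\theta$, $\psi_3=\tau+\partial_s\theta$. Framed curvature flow: $\partial_t\gamma=\kappa\nu_\theta$, $\partial_t\theta=\upsilon_\theta$ on $[0,\underline t)\times S^1$. Trajectory surface $\Sigma_{\underline t}=\bigcup_{t\in[0,\underline t)}\Gamma_t$, parametrized by $(u,t)\mapsto\gamma(t,u)$; its mean curvature is $\mathrm{tr}(\mathrm{I\!I}\,\mathrm{I}^{-1})$ (sum of principal curvatures) with respect to the unit normal $\beta_\theta$. *)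

theory Defs
  imports "HOL-Analysis.Analysis"
begin

unbundle no cross3_syntax

text \<open>A time-dependent curve is a function gamma t u (time t, parameter u);
  scalar fields such as theta are functions of (t, u) as well.\<close>

definition Du :: "(real \<Rightarrow> real \<Rightarrow> 'a::real_normed_vector) \<Rightarrow> real \<Rightarrow> real \<Rightarrow> 'a" where
  "Du F t u = vector_derivative (\<lambda>v. F t v) (at u)"

definition Dt :: "(real \<Rightarrow> real \<Rightarrow> 'a::real_normed_vector) \<Rightarrow> real \<Rightarrow> real \<Rightarrow> 'a" where
  "Dt F t u = vector_derivative (\<lambda>s. F s u) (at t)"

fun iterD :: "bool list \<Rightarrow> (real \<Rightarrow> real \<Rightarrow> 'a::real_normed_vector) \<Rightarrow> real \<Rightarrow> real \<Rightarrow> 'a" where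
  "iterD [] F = F"
| "iterD (b # ws) F = (if b then Dt else Du) (iterD ws F)"

definition smooth_on2 :: "real set \<Rightarrow> real set \<Rightarrow> (real \<Rightarrow> real \<Rightarrow> 'a::real_normed_vector) \<Rightarrow> bool" where
  "smooth_on2 I J F \<longleftrightarrow>
     (\<forall>ws. continuous_on (Sigma I (\<lambda>_. J)) (\<lambda>p. iterD ws F (fst p) (snd p)) \<and>
       (\<forall>t\<in>I. \<forall>u\<in>J. (\<lambda>s. iterD ws F s u) differentiable (at t) \<and>
                     (\<lambda>v. iterD ws F t v) differentiable (at u)))"

definition speed :: "(real \<Rightarrow> real \<Rightarrow> real^3) \<Rightarrow> real \<Rightarrow> real \<Rightarrow> real" where
  "speed \<gamma> t u = norm (Du \<gamma> t u)"

definition Ds :: "(real \<Rightarrow> real \<Rightarrow> real^3) \<Rightarrow> (real \<Rightarrow> real \<Rightarrow> 'a::real_normed_vector) \<Rightarrow> real \<Rightarrow> real \<Rightarrow> 'a" where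
  "Ds \<gamma> F t u = inverse (speed \<gamma> t u) *\<^sub>R Du F t u"

definition tangent :: "(real \<Rightarrow> real \<Rightarrow> real^3) \<Rightarrow> real \<Rightarrow> real \<Rightarrow> real^3" where
  "tangent \<gamma> = Ds \<gamma> \<gamma>"

definition curvature :: "(real \<Rightarrow> real \<Rightarrow> real^3) \<Rightarrow> real \<Rightarrow> real \<Rightarrow> real" where
  "curvature \<gamma> t u = norm (Ds \<gamma> (tangent \<gamma>) t u)"

definition normal :: "(real \<Rightarrow> real \<Rightarrow> real^3) \<Rightarrow> real \<Rightarrow> real \<Rightarrow> real^3" where
  "normal \<gamma> t u = inverse (curvature \<gamma> t u) *\<^sub>R Ds \<gamma> (tangent \<gamma>) t u"

definition binormal :: "(real \<Rightarrow> real \<Rightarrow> real^3) \<Rightarrow> real \<Rightarrow> real \<Rightarrow> real^3" where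
  "binormal \<gamma> t u = cross3 (tangent \<gamma> t u) (normal \<gamma> t u)"

definition torsion :: "(real \<Rightarrow> real \<Rightarrow> real^3) \<Rightarrow> real \<Rightarrow> real \<Rightarrow> real" where
  "torsion \<gamma> t u = Ds \<gamma> (normal \<gamma>) t u \<bullet> binormal \<gamma> t u"

definition nu :: "(real \<Rightarrow> real \<Rightarrow> real^3) \<Rightarrow> (real \<Rightarrow> real \<Rightarrow> real) \<Rightarrow> real \<Rightarrow> real \<Rightarrow> real^3" where
  "nu \<gamma> \<theta> t u = cos (\<theta> t u) *\<^sub>R normal \<gamma> t u + sin (\<theta> t u) *\<^sub>R binormal \<gamma> t u"

definition beta :: "(real \<Rightarrow> real \<Rightarrow> real^3) \<Rightarrow> (real \<Rightarrow> real \<Rightarrow> real) \<Rightarrow> real \<Rightarrow> real \<Rightarrow> real^3" where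
  "beta \<gamma> \<theta> t u = cross3 (tangent \<gamma> t u) (nu \<gamma> \<theta> t u)"

definition psi1 :: "(real \<Rightarrow> real \<Rightarrow> real^3) \<Rightarrow> (real \<Rightarrow> real \<Rightarrow> real) \<Rightarrow> real \<Rightarrow> real \<Rightarrow> real" where
  "psi1 \<gamma> \<theta> t u = curvature \<gamma> t u * cos (\<theta> t u)"

definition psi2 :: "(real \<Rightarrow> real \<Rightarrow> real^3) \<Rightarrow> (real \<Rightarrow> real \<Rightarrow> real) \<Rightarrow> real \<Rightarrow> real \<Rightarrow> real" where
  "psi2 \<gamma> \<theta> t u = curvature \<gamma> t u * sin (\<theta> t u)"

definition psi3 :: "(real \<Rightarrow> real \<Rightarrow> real^3) \<Rightarrow> (real \<Rightarrow> real \<Rightarrow> real) \<Rightarrow> real \<Rightarrow> real \<Rightarrow> real" where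
  "psi3 \<gamma> \<theta> t u = torsion \<gamma> t u + Ds \<gamma> \<theta> t u"

definition upsilon :: "real \<Rightarrow> (real \<Rightarrow> real \<Rightarrow> real^3) \<Rightarrow> (real \<Rightarrow> real \<Rightarrow> real) \<Rightarrow> real \<Rightarrow> real \<Rightarrow> real" where
  "upsilon H \<gamma> \<theta> t u =
     (let k = curvature \<gamma> t u; p3 = psi3 \<gamma> \<theta> t u in
      k * H
      - (k * Ds \<gamma> (psi3 \<gamma> \<theta>) t u + 2 * Ds \<gamma> (curvature \<gamma>) t u * p3) * k powi (-2) * psi1 \<gamma> \<theta> t u
      + (k ^ 3 + k * p3 ^ 2 - Ds \<gamma> (Ds \<gamma> (curvature \<gamma>)) t u) * k powi (-2) * psi2 \<gamma> \<theta> t u)"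

definition first_ff :: "(real \<Rightarrow> real \<Rightarrow> real^3) \<Rightarrow> real \<Rightarrow> real \<Rightarrow> real^2^2" where
  "first_ff X t u =
     vector [vector [Du X t u \<bullet> Du X t u, Du X t u \<bullet> Dt X t u],
             vector [Dt X t u \<bullet> Du X t u, Dt X t u \<bullet> Dt X t u]]"

definition second_ff :: "(real \<Rightarrow> real \<Rightarrow> real^3) \<Rightarrow> (real \<Rightarrow> real \<Rightarrow> real^3) \<Rightarrow> real \<Rightarrow> real \<Rightarrow> real^2^2" where
  "second_ff X n t u =
     vector [vector [Du (Du X) t u \<bullet> n t u, Dt (Du X) t u \<bullet> n t u],
             vector [Du (Dt X) t u \<bullet> n t u, Dt (Dt X) t u \<bullet> n t u]]"

definition mean_curvature :: "(real \<Rightarrow> real \<Rightarrow> real^3) \<Rightarrow> (real \<Rightarrow> real \<Rightarrow> real^3) \<Rightarrow> real \<Rightarrow> real \<Rightarrow> real" where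
  "mean_curvature X n t u = trace (second_ff X n t u ** matrix_inv (first_ff X t u))"

end

theory Submission
  imports Defs
begin


lemma smooth_cont:
  "smooth_on2 I J F \<Longrightarrow> continuous_on (Sigma I (\<lambda>_. J)) (\<lambda>p. iterD ws F (fst p) (snd p))"
  by (simp add: smooth_on2_def)

lemma smooth_dt:
  "smooth_on2 I J F \<Longrightarrow> t \<in> I \<Longrightarrow> u \<in> J \<Longrightarrow>
    ((\<lambda>s. iterD ws F s u) has_vector_derivative iterD (True # ws) F t u) (at t)"
  unfolding smooth_on2_def by (auto simp: Dt_def vector_derivative_works[symmetric])

lemma smooth_du:
  "smooth_on2 I J F \<Longrightarrow> t \<in> I \<Longrightarrow> u \<in> J \<Longrightarrow>
    ((\<lambda>v. iterD ws F t v) has_vector_derivative iterD (False # ws) F t u) (at u)"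
  unfolding smooth_on2_def by (auto simp: Du_def vector_derivative_works[symmetric])

lemma schwarz:
  fixes F :: "real \<Rightarrow> real \<Rightarrow> 'a::euclidean_space"
  assumes S: "smooth_on2 I UNIV F" and I: "open I" "convex I" and t0: "t0 \<in> I"
  shows "Dt (Du F) t0 u0 = Du (Dt F) t0 u0"
proof -
  define a where "a = u0 - 1"
  define G where "G = iterD [False] F"
  define Gt where "Gt = iterD [True, False] F"
  define Ft where "Ft = iterD [True] F"
  have Gder: "\<And>s w. s \<in> I \<Longrightarrow> ((\<lambda>w. F s w) has_vector_derivative G s w) (at w)"
    using smooth_du[OF S, of _ _ "[]"] unfolding G_def by auto
  have Gtder: "\<And>s w. s \<in> I \<Longrightarrow> ((\<lambda>s. G s w) has_vector_derivative Gt s w) (at s)"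
    using smooth_dt[OF S, of _ _ "[False]"] unfolding G_def Gt_def by auto
  have Ftder: "\<And>s w. s \<in> I \<Longrightarrow> ((\<lambda>s. F s w) has_vector_derivative Ft s w) (at s)"
    using smooth_dt[OF S, of _ _ "[]"] unfolding Ft_def by auto
  have Gcont: "continuous_on (I \<times> UNIV) (\<lambda>p. G (fst p) (snd p))"
    using smooth_cont[OF S, of "[False]"] unfolding G_def by simp
  have Gtcont: "continuous_on (I \<times> UNIV) (\<lambda>p. Gt (fst p) (snd p))"
    using smooth_cont[OF S, of "[True,False]"] unfolding Gt_def by simp
  have Gscont: "continuous_on UNIV (G s)" if "s \<in> I" for s
  proof -
    have "continuous_on UNIV (\<lambda>w. (\<lambda>p. G (fst p) (snd p)) (s, w))"
      by (rule continuous_on_compose2[OF Gcont]) (auto intro!: continuous_intros simp: that)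
    then show ?thesis by simp
  qed
  have Gtscont: "continuous_on UNIV (Gt s)" if "s \<in> I" for s
  proof -
    have "continuous_on UNIV (\<lambda>w. (\<lambda>p. Gt (fst p) (snd p)) (s, w))"
      by (rule continuous_on_compose2[OF Gtcont]) (auto intro!: continuous_intros simp: that)
    then show ?thesis by simp
  qed
  have FTC: "F s v = F s a + integral {a..v} (G s)" if "s \<in> I" "a \<le> v" for s v
  proof -
    have "(G s has_integral (F s v - F s a)) {a..v}"
      by (rule fundamental_theorem_of_calculus[OF that(2)])
         (auto intro: has_vector_derivative_at_within Gder[OF that(1)])
    then show ?thesis by (simp add: integral_unique)
  qed
  have Ftv: "Ft t0 v = Ft t0 a + integral {a..v} (Gt t0)" if "a \<le> v" for v
  proof -
    have L: "((\<lambda>s. integral (cbox a v) (G s)) has_vector_derivative integral (cbox a v) (Gt t0)) (at t0 within I)"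
      apply (rule leibniz_rule_vector_derivative[OF _ _ _ t0 I(2)])
      subgoal by (auto intro: has_vector_derivative_at_within Gtder)
      subgoal for s apply (rule integrable_continuous) using continuous_on_subset[OF Gscont[of s]] by blast
      subgoal by (rule continuous_on_subset[OF Gtcont, unfolded case_prod_beta[symmetric]]) auto
      done
    then have L': "((\<lambda>s. integral {a..v} (G s)) has_vector_derivative integral {a..v} (Gt t0)) (at t0)"
      using at_within_open[OF t0 I(1)] by simp
    have "((\<lambda>s. F s a + integral {a..v} (G s)) has_vector_derivative Ft t0 a + integral {a..v} (Gt t0)) (at t0)"
      by (intro has_vector_derivative_add Ftder t0 L')
    then have "((\<lambda>s. F s v) has_vector_derivative Ft t0 a + integral {a..v} (Gt t0)) (at t0)"
      by (rule has_vector_derivative_transform_within_open[OF _ I(1) t0]) (rule sym, rule FTC, assumption, rule that)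
    from vector_derivative_unique_at[OF Ftder[OF t0] this] show ?thesis .
  qed
  have "((\<lambda>v. integral {a..v} (Gt t0)) has_vector_derivative Gt t0 u0) (at u0 within {a..u0+1})"
    by (rule integral_has_vector_derivative) (use continuous_on_subset[OF Gtscont[OF t0]] in \<open>auto simp: a_def\<close>)
  moreover have "at u0 within {a..u0+1} = at u0"
    by (rule at_within_interior) (auto simp: a_def)
  ultimately have "((\<lambda>v. integral {a..v} (Gt t0)) has_vector_derivative Gt t0 u0) (at u0)" by simp
  then have "((\<lambda>v. Ft t0 a + integral {a..v} (Gt t0)) has_vector_derivative 0 + Gt t0 u0) (at u0)"
    by (intro has_vector_derivative_add has_vector_derivative_const)
  then have "((\<lambda>v. Ft t0 a + integral {a..v} (Gt t0)) has_vector_derivative Gt t0 u0) (at u0)" by simp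
  then have "((\<lambda>v. Ft t0 v) has_vector_derivative Gt t0 u0) (at u0)"
    apply (rule has_vector_derivative_transform_within_open[where S="{a<..}"])
    subgoal by simp
    subgoal by (simp add: a_def)
    subgoal for y using Ftv[of y] by (simp add: a_def)
    done
  then have "Du (Dt F) t0 u0 = Gt t0 u0"
    unfolding Du_def Ft_def by (simp add: vector_derivative_at)
  then show ?thesis unfolding Gt_def by simp
qed



lemma bb_cross: "bounded_bilinear cross3"
  using bilinear_conv_bounded_bilinear bilinear_cross by blast

inductive smR :: "(real \<Rightarrow> real) \<Rightarrow> bool" and smV :: "(real \<Rightarrow> real^3) \<Rightarrow> bool" where
  R_base: "smooth_on2 I UNIV F \<Longrightarrow> t \<in> I \<Longrightarrow> smR (\<lambda>u. iterD ws F t u)"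
| R_const: "smR (\<lambda>u. c)"
| R_add: "smR f \<Longrightarrow> smR g \<Longrightarrow> smR (\<lambda>u. f u + g u)"
| R_mult: "smR f \<Longrightarrow> smR g \<Longrightarrow> smR (\<lambda>u. f u * g u)"
| R_inv: "smR f \<Longrightarrow> (\<forall>u. f u \<noteq> 0) \<Longrightarrow> smR (\<lambda>u. inverse (f u))"
| R_sqrt: "smR f \<Longrightarrow> (\<forall>u. f u > 0) \<Longrightarrow> smR (\<lambda>u. sqrt (f u))"
| R_sin: "smR f \<Longrightarrow> smR (\<lambda>u. sin (f u))"
| R_cos: "smR f \<Longrightarrow> smR (\<lambda>u. cos (f u))"
| R_inner: "smV f \<Longrightarrow> smV g \<Longrightarrow> smR (\<lambda>u. f u \<bullet> g u)"
| V_base: "smooth_on2 I UNIV G \<Longrightarrow> t \<in> I \<Longrightarrow> smV (\<lambda>u. iterD ws G t u)"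
| V_add: "smV f \<Longrightarrow> smV g \<Longrightarrow> smV (\<lambda>u. f u + g u)"
| V_scale: "smR a \<Longrightarrow> smV f \<Longrightarrow> smV (\<lambda>u. a u *\<^sub>R f u)"
| V_cross: "smV f \<Longrightarrow> smV g \<Longrightarrow> smV (\<lambda>u. cross3 (f u) (g u))"

lemma sm_deriv:
  shows "smR f \<Longrightarrow> (\<exists>f'. smR f' \<and> (\<forall>u. (f has_real_derivative f' u) (at u)))"
    and "smV h \<Longrightarrow> (\<exists>h'. smV h' \<and> (\<forall>u. (h has_vector_derivative h' u) (at u)))"
proof (induction f and h rule: smR_smV.inducts)
  case (R_base I F t ws)
  show ?case
    apply (rule exI[of _ "\<lambda>u. iterD (False # ws) F t u"])
    using smR_smV.R_base[OF R_base, of "False # ws"] smooth_du[OF R_base(1,2), of _ ws]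
    by (simp only: has_real_derivative_iff_has_vector_derivative) simp
next
  case (R_const c)
  show ?case by (rule exI[of _ "\<lambda>u. 0"]) (auto intro: smR_smV.intros)
next
  case (R_add f g)
  then obtain f' g' where "smR f'" "\<forall>u. (f has_real_derivative f' u) (at u)"
     "smR g'" "\<forall>u. (g has_real_derivative g' u) (at u)" by blast
  then show ?case
    by (intro exI[of _ "\<lambda>u. f' u + g' u"]) (auto intro!: smR_smV.intros derivative_eq_intros)
next
  case (R_mult f g)
  then obtain f' g' where "smR f'" "\<forall>u. (f has_real_derivative f' u) (at u)"
     "smR g'" "\<forall>u. (g has_real_derivative g' u) (at u)" by blast
  then show ?case
    by (intro exI[of _ "\<lambda>u. f' u * g u + f u * g' u"]) (auto intro!: smR_smV.intros derivative_eq_intros R_mult)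
next
  case (R_inv f)
  then obtain f' where f': "smR f'" "\<forall>u. (f has_real_derivative f' u) (at u)" by blast
  show ?case
    apply (intro exI[of _ "\<lambda>u. (-1) * f' u * (inverse (f u) * inverse (f u))"] conjI allI)
    subgoal by (intro smR_smV.R_mult smR_smV.R_const smR_smV.R_inv f'(1) R_inv(1) R_inv(2))
    subgoal for u using DERIV_inverse_fun[OF f'(2)[rule_format, of u]] R_inv(2)
      by (simp add: power2_eq_square)
    done
next
  case (R_sqrt f)
  then obtain f' where f': "smR f'" "\<forall>u. (f has_real_derivative f' u) (at u)" by blast
  show ?case
    apply (intro exI[of _ "\<lambda>u. f' u * (inverse (sqrt (f u)) * (1/2))"] conjI allI)
    subgoal
    proof -
      have s: "smR (\<lambda>u. sqrt (f u))" by (rule smR_smV.R_sqrt) fact+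
      have "\<forall>u. sqrt (f u) \<noteq> 0" using R_sqrt(2) by (simp add: less_imp_neq[symmetric])
      then have "smR (\<lambda>u. inverse (sqrt (f u)))" by (rule smR_smV.R_inv[OF s])
      then show ?thesis by (intro smR_smV.R_mult smR_smV.R_const f'(1))
    qed
    subgoal for u
    proof -
      have p: "0 < f u" using R_sqrt(2) by blast
      have "((\<lambda>x. sqrt (f x)) has_real_derivative inverse (sqrt (f u)) / 2 * f' u) (at u)"
        by (rule DERIV_chain2[OF DERIV_real_sqrt[OF p] f'(2)[rule_format]])
      then show ?thesis by (rule DERIV_cong) (simp add: field_simps)
    qed
    done
next
  case (R_sin f)
  then obtain f' where f': "smR f'" "\<forall>u. (f has_real_derivative f' u) (at u)" by blast
  show ?case
    apply (intro exI[of _ "\<lambda>u. cos (f u) * f' u"] conjI allI)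
    subgoal using R_sin f' by (auto intro!: smR_smV.intros)
    subgoal for u using f'(2) by (auto intro!: derivative_eq_intros)
    done
next
  case (R_cos f)
  then obtain f' where f': "smR f'" "\<forall>u. (f has_real_derivative f' u) (at u)" by blast
  show ?case
    apply (intro exI[of _ "\<lambda>u. (-1) * sin (f u) * f' u"] conjI allI)
    subgoal by (intro smR_smV.R_mult smR_smV.R_const smR_smV.R_sin f'(1) R_cos(1))
    subgoal for u using f'(2) by (auto intro!: derivative_eq_intros)
    done
next
  case (R_inner f g)
  then obtain f' g' where "smV f'" "\<forall>u. (f has_vector_derivative f' u) (at u)"
     "smV g'" "\<forall>u. (g has_vector_derivative g' u) (at u)" by blast
  then show ?case
    apply (intro exI[of _ "\<lambda>u. f u \<bullet> g' u + f' u \<bullet> g u"] conjI allI)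
    subgoal using R_inner by (auto intro!: smR_smV.intros)
    subgoal for u unfolding has_real_derivative_iff_has_vector_derivative
      by (rule bounded_bilinear.has_vector_derivative[OF bounded_bilinear_inner]) auto
    done
next
  case (V_base I G t ws)
  show ?case
    apply (rule exI[of _ "\<lambda>u. iterD (False # ws) G t u"])
    using smR_smV.V_base[OF V_base, of "False # ws"] smooth_du[OF V_base(1,2), of _ ws] by simp
next
  case (V_add f g)
  then obtain f' g' where "smV f'" "\<forall>u. (f has_vector_derivative f' u) (at u)"
     "smV g'" "\<forall>u. (g has_vector_derivative g' u) (at u)" by blast
  then show ?case
    by (intro exI[of _ "\<lambda>u. f' u + g' u"]) (auto intro!: smR_smV.intros derivative_eq_intros)
next
  case (V_scale a f)
  then obtain a' f' where "smR a'" "\<forall>u. (a has_real_derivative a' u) (at u)"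
     "smV f'" "\<forall>u. (f has_vector_derivative f' u) (at u)" by blast
  then show ?case
    apply (intro exI[of _ "\<lambda>u. a u *\<^sub>R f' u + a' u *\<^sub>R f u"] conjI allI)
    subgoal using V_scale by (auto intro!: smR_smV.intros)
    subgoal for u by (rule has_vector_derivative_scaleR) auto
    done
next
  case (V_cross f g)
  then obtain f' g' where "smV f'" "\<forall>u. (f has_vector_derivative f' u) (at u)"
     "smV g'" "\<forall>u. (g has_vector_derivative g' u) (at u)" by blast
  then show ?case
    apply (intro exI[of _ "\<lambda>u. cross3 (f u) (g' u) + cross3 (f' u) (g u)"] conjI allI)
    subgoal using V_cross by (auto intro!: smR_smV.intros)
    subgoal for u by (rule bounded_bilinear.has_vector_derivative[OF bb_cross]) auto
    done
qed



lemma smV_D: assumes "smV h"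
  shows "smV (\<lambda>u. vector_derivative h (at u))" "(h has_vector_derivative vector_derivative h (at u)) (at u)"
proof -
  obtain h' where h': "smV h'" "\<forall>u. (h has_vector_derivative h' u) (at u)" using sm_deriv(2)[OF assms] by blast
  have e: "(\<lambda>u. vector_derivative h (at u)) = h'" using h'(2) by (auto intro!: ext vector_derivative_at)
  show "smV (\<lambda>u. vector_derivative h (at u))" using e h'(1) by simp
  show "(h has_vector_derivative vector_derivative h (at u)) (at u)" using e h'(2) by metis
qed

lemma smR_D: assumes "smR h"
  shows "smR (\<lambda>u. vector_derivative h (at u))" "(h has_vector_derivative vector_derivative h (at u)) (at u)"
    "(h has_real_derivative vector_derivative h (at u)) (at u)"
proof -
  obtain h' where h': "smR h'" "\<forall>u. (h has_real_derivative h' u) (at u)" using sm_deriv(1)[OF assms] by blast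
  have e: "(\<lambda>u. vector_derivative h (at u)) = h'" using h'(2)
    by (auto intro!: ext vector_derivative_at simp: has_real_derivative_iff_has_vector_derivative)
  show "smR (\<lambda>u. vector_derivative h (at u))" using e h'(1) by simp
  show "(h has_real_derivative vector_derivative h (at u)) (at u)" using e h'(2) by metis
  then show "(h has_vector_derivative vector_derivative h (at u)) (at u)"
    by (simp add: has_real_derivative_iff_has_vector_derivative)
qed

lemma R_diff: "smR f \<Longrightarrow> smR g \<Longrightarrow> smR (\<lambda>u. f u - g u)"
proof -
  assume "smR f" "smR g"
  then have "smR (\<lambda>u. f u + (-1) * g u)" by (intro smR_smV.intros)
  then show ?thesis by simp
qed

lemma R_norm: "smV f \<Longrightarrow> (\<forall>u. f u \<noteq> 0) \<Longrightarrow> smR (\<lambda>u. norm (f u))"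
proof -
  assume "smV f" "\<forall>u. f u \<noteq> 0"
  then have "smR (\<lambda>u. sqrt (f u \<bullet> f u))" by (intro smR_smV.intros) auto
  then show ?thesis by (simp add: norm_eq_sqrt_inner)
qed

lemma iterD_append: "iterD ws (iterD vs F) = iterD (ws @ vs) F"
  by (induction ws) auto

lemma smooth_iterD: "smooth_on2 I J F \<Longrightarrow> smooth_on2 I J (iterD vs F)"
  unfolding smooth_on2_def iterD_append by blast

locale FF =
  fixes \<gamma> :: "real \<Rightarrow> real \<Rightarrow> real^3" and \<theta> :: "real \<Rightarrow> real \<Rightarrow> real" and I :: "real set"
  assumes sg: "smooth_on2 I UNIV \<gamma>" and sth: "smooth_on2 I UNIV \<theta>"
    and oI: "open I" and cI: "convex I"
    and reg: "\<And>t u. t \<in> I \<Longrightarrow> speed \<gamma> t u > 0"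
    and cp: "\<And>t u. t \<in> I \<Longrightarrow> curvature \<gamma> t u > 0"
    and fg: "\<And>t u. t \<in> I \<Longrightarrow> Dt \<gamma> t u = curvature \<gamma> t u *\<^sub>R nu \<gamma> \<theta> t u"
begin

lemma Ds_eq: "Ds \<gamma> F t u = inverse (speed \<gamma> t u) *\<^sub>R vector_derivative (F t) (at u)"
  by (simp add: Ds_def Du_def)

lemma sm_P: "t \<in> I \<Longrightarrow> smV (\<lambda>u. Du \<gamma> t u)"
  using V_base[OF sg, of t "[False]"] by simp

lemma sm_V: "t \<in> I \<Longrightarrow> smV (\<lambda>u. Dt \<gamma> t u)"
  using V_base[OF sg, of t "[True]"] by simp

lemma sm_th: "t \<in> I \<Longrightarrow> smR (\<lambda>u. \<theta> t u)"
  using R_base[OF sth, of t "[]"] by simp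

lemma sm_g: "t \<in> I \<Longrightarrow> smR (\<lambda>u. speed \<gamma> t u)"
  unfolding speed_def using reg[of t] 
  by (intro R_norm sm_P) (auto simp: speed_def)

lemma sm_ig: "t \<in> I \<Longrightarrow> smR (\<lambda>u. inverse (speed \<gamma> t u))"
  using reg[of t] by (intro R_inv sm_g) (auto simp: less_imp_neq[symmetric])

lemma sm_DsV: "t \<in> I \<Longrightarrow> smV (\<lambda>u. F t u) \<Longrightarrow> smV (\<lambda>u. Ds \<gamma> F t u)"
  unfolding Ds_eq using smV_D(1) by (intro V_scale sm_ig) auto

lemma sm_DsR: "t \<in> I \<Longrightarrow> smR (\<lambda>u. F t u) \<Longrightarrow> smR (\<lambda>u. Ds \<gamma> F t u)"
proof -
  assume a: "t \<in> I" "smR (\<lambda>u. F t u)"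
  have "smR (\<lambda>u. inverse (speed \<gamma> t u) * vector_derivative (F t) (at u))"
    using smR_D(1)[OF a(2)] by (intro R_mult sm_ig a(1)) simp
  then show ?thesis unfolding Ds_eq by simp
qed

lemma T_eq: "tangent \<gamma> t u = inverse (speed \<gamma> t u) *\<^sub>R Du \<gamma> t u"
  by (simp add: tangent_def Ds_def)

lemma sm_T: "t \<in> I \<Longrightarrow> smV (\<lambda>u. tangent \<gamma> t u)"
  unfolding T_eq by (intro V_scale sm_ig sm_P)

lemma sm_k: "t \<in> I \<Longrightarrow> smR (\<lambda>u. curvature \<gamma> t u)"
  unfolding curvature_def using cp[of t]
  by (intro R_norm sm_DsV sm_T) (auto simp: curvature_def)

lemma sm_N: "t \<in> I \<Longrightarrow> smV (\<lambda>u. normal \<gamma> t u)"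
  unfolding normal_def using cp[of t]
  by (intro V_scale R_inv sm_k sm_DsV sm_T) (auto simp: less_imp_neq[symmetric])

lemma sm_B: "t \<in> I \<Longrightarrow> smV (\<lambda>u. binormal \<gamma> t u)"
  unfolding binormal_def by (intro V_cross sm_N sm_T)

lemma sm_tau: "t \<in> I \<Longrightarrow> smR (\<lambda>u. torsion \<gamma> t u)"
  unfolding torsion_def by (intro R_inner sm_B sm_DsV sm_N)

lemma sm_nu: "t \<in> I \<Longrightarrow> smV (\<lambda>u. nu \<gamma> \<theta> t u)"
  unfolding nu_def by (intro V_add V_scale R_sin R_cos sm_th sm_N sm_B)

end


lemma const_deriv: "(f has_real_derivative d) (at u) \<Longrightarrow> (\<And>v. f v = c) \<Longrightarrow> d = 0"
proof -
  assume a: "(f has_real_derivative d) (at u)" "\<And>v. f v = c"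
  have "f = (\<lambda>v. c)" using a(2) by auto
  with a(1) have "((\<lambda>v. c) has_real_derivative d) (at u)" by simp
  then show "d = 0" using DERIV_const DERIV_unique by blast
qed

context FF begin

lemma dV: "smV (\<lambda>u. F t u) \<Longrightarrow> ((\<lambda>u. F t u) has_vector_derivative Du F t u) (at u)"
  unfolding Du_def using smV_D(2) by auto

lemma dR: "smR (\<lambda>u. F t u) \<Longrightarrow> ((\<lambda>u. F t u) has_real_derivative Du F t u) (at u)"
  unfolding Du_def using smR_D(3) by auto

lemma DsV_at: "((\<lambda>u. F t u) has_vector_derivative F') (at u) \<Longrightarrow> Ds \<gamma> F t u = inverse (speed \<gamma> t u) *\<^sub>R F'"
  unfolding Ds_def Du_def by (simp add: vector_derivative_at)

lemma DsR_at: "((\<lambda>u. F t u) has_real_derivative F') (at u) \<Longrightarrow> Ds \<gamma> F t u = inverse (speed \<gamma> t u) * F'"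
  unfolding Ds_def Du_def by (simp add: vector_derivative_at has_real_derivative_iff_has_vector_derivative)

lemma Ds_scale:
  assumes "smR (\<lambda>u. a t u)" "smV (\<lambda>u. F t u)"
  shows "Ds \<gamma> (\<lambda>t u. a t u *\<^sub>R F t u) t u = Ds \<gamma> a t u *\<^sub>R F t u + a t u *\<^sub>R Ds \<gamma> F t u"
proof -
  have "((\<lambda>u. a t u *\<^sub>R F t u) has_vector_derivative a t u *\<^sub>R Du F t u + Du a t u *\<^sub>R F t u) (at u)"
    by (rule has_vector_derivative_scaleR[OF dR[of a t, OF assms(1)] dV[of F t, OF assms(2)]])
  from DsV_at[of "\<lambda>t u. a t u *\<^sub>R F t u" t, OF this] show ?thesis
    unfolding Ds_def by (simp add: algebra_simps)
qed

lemma Ds_add: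
  assumes "smV (\<lambda>u. F t u)" "smV (\<lambda>u. G t u)"
  shows "Ds \<gamma> (\<lambda>t u. F t u + G t u) t u = Ds \<gamma> F t u + Ds \<gamma> G t u"
proof -
  have "((\<lambda>u. F t u + G t u) has_vector_derivative Du F t u + Du G t u) (at u)"
    by (rule has_vector_derivative_add[OF dV[of F t, OF assms(1)] dV[of G t, OF assms(2)]])
  from DsV_at[of "\<lambda>t u. F t u + G t u" t, OF this] show ?thesis
    unfolding Ds_def by (simp add: algebra_simps)
qed

lemma Ds_cross:
  assumes "smV (\<lambda>u. F t u)" "smV (\<lambda>u. G t u)"
  shows "Ds \<gamma> (\<lambda>t u. cross3 (F t u) (G t u)) t u = cross3 (Ds \<gamma> F t u) (G t u) + cross3 (F t u) (Ds \<gamma> G t u)"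
proof -
  have "((\<lambda>u. cross3 (F t u) (G t u)) has_vector_derivative cross3 (F t u) (Du G t u) + cross3 (Du F t u) (G t u)) (at u)"
    by (rule bounded_bilinear.has_vector_derivative[OF bb_cross dV[of F t, OF assms(1)] dV[of G t, OF assms(2)]])
  from DsV_at[of "\<lambda>t u. cross3 (F t u) (G t u)" t, OF this] show ?thesis
    unfolding Ds_def by (simp add: algebra_simps cross_mult_left cross_mult_right)
qed

lemma Ds_inner:
  assumes "smV (\<lambda>u. F t u)" "smV (\<lambda>u. G t u)"
  shows "Ds \<gamma> (\<lambda>t u. F t u \<bullet> G t u) t u = Ds \<gamma> F t u \<bullet> G t u + F t u \<bullet> Ds \<gamma> G t u"
proof -
  have "((\<lambda>u. F t u \<bullet> G t u) has_vector_derivative F t u \<bullet> Du G t u + Du F t u \<bullet> G t u) (at u)"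
    by (rule bounded_bilinear.has_vector_derivative[OF bounded_bilinear_inner dV[of F t, OF assms(1)] dV[of G t, OF assms(2)]])
  then have "((\<lambda>u. F t u \<bullet> G t u) has_real_derivative F t u \<bullet> Du G t u + Du F t u \<bullet> G t u) (at u)"
    by (simp add: has_real_derivative_iff_has_vector_derivative)
  from DsR_at[of "\<lambda>t u. F t u \<bullet> G t u" t, OF this] show ?thesis
    unfolding Ds_def by (simp add: algebra_simps)
qed

lemma Ds_mult:
  assumes "smR (\<lambda>u. F t u)" "smR (\<lambda>u. G t u)"
  shows "Ds \<gamma> (\<lambda>t u. F t u * G t u) t u = Ds \<gamma> F t u * G t u + F t u * Ds \<gamma> G t u"
proof -
  have "((\<lambda>u. F t u * G t u) has_real_derivative Du F t u * G t u + F t u * Du G t u) (at u)"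
    using dR[of F t, OF assms(1)] dR[of G t, OF assms(2)] by (auto intro!: derivative_eq_intros)
  from DsR_at[of "\<lambda>t u. F t u * G t u" t, OF this] show ?thesis
    unfolding Ds_def by (simp add: algebra_simps)
qed

lemma Ds_Radd:
  assumes "smR (\<lambda>u. F t u)" "smR (\<lambda>u. G t u)"
  shows "Ds \<gamma> (\<lambda>t u. F t u + G t u) t u = Ds \<gamma> F t u + Ds \<gamma> G t u"
proof -
  have "((\<lambda>u. F t u + G t u) has_real_derivative Du F t u + Du G t u) (at u)"
    using dR[of F t, OF assms(1)] dR[of G t, OF assms(2)] by (auto intro!: derivative_eq_intros)
  from DsR_at[of "\<lambda>t u. F t u + G t u" t, OF this] show ?thesis
    unfolding Ds_def by (simp add: algebra_simps)
qed

lemma Ds_sin: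
  assumes "smR (\<lambda>u. F t u)"
  shows "Ds \<gamma> (\<lambda>t u. sin (F t u)) t u = cos (F t u) * Ds \<gamma> F t u"
proof -
  have "((\<lambda>u. sin (F t u)) has_real_derivative cos (F t u) * Du F t u) (at u)"
    using dR[of F t, OF assms(1)] by (auto intro!: derivative_eq_intros)
  from DsR_at[of "\<lambda>t u. sin (F t u)" t, OF this] show ?thesis
    unfolding Ds_def by (simp add: algebra_simps)
qed

lemma Ds_cos:
  assumes "smR (\<lambda>u. F t u)"
  shows "Ds \<gamma> (\<lambda>t u. cos (F t u)) t u = - sin (F t u) * Ds \<gamma> F t u"
proof -
  have "((\<lambda>u. cos (F t u)) has_real_derivative - sin (F t u) * Du F t u) (at u)"
    using dR[of F t, OF assms(1)] by (auto intro!: derivative_eq_intros)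
  from DsR_at[of "\<lambda>t u. cos (F t u)" t, OF this] show ?thesis
    unfolding Ds_def by (simp add: algebra_simps)
qed

lemma Ds_const_inner:
  assumes "smV (\<lambda>u. F t u)" "\<And>v. F t v \<bullet> F t v = 1"
  shows "Ds \<gamma> F t u \<bullet> F t u = 0"
proof -
  have "((\<lambda>u. F t u \<bullet> F t u) has_vector_derivative F t u \<bullet> Du F t u + Du F t u \<bullet> F t u) (at u)"
    by (rule bounded_bilinear.has_vector_derivative[OF bounded_bilinear_inner dV[of F t, OF assms(1)] dV[of F t, OF assms(1)]])
  then have "((\<lambda>u. F t u \<bullet> F t u) has_real_derivative F t u \<bullet> Du F t u + Du F t u \<bullet> F t u) (at u)"
    by (simp add: has_real_derivative_iff_has_vector_derivative)
  from const_deriv[OF this assms(2)] have "Du F t u \<bullet> F t u = 0" by (simp add: inner_commute)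
  then show ?thesis unfolding Ds_def by simp
qed

lemma Ds_orth_inner:
  assumes "smV (\<lambda>u. F t u)" "smV (\<lambda>u. G t u)" "\<And>v. F t v \<bullet> G t v = 0"
  shows "Ds \<gamma> F t u \<bullet> G t u + F t u \<bullet> Ds \<gamma> G t u = 0"
proof -
  have "((\<lambda>u. F t u \<bullet> G t u) has_vector_derivative F t u \<bullet> Du G t u + Du F t u \<bullet> G t u) (at u)"
    by (rule bounded_bilinear.has_vector_derivative[OF bounded_bilinear_inner dV[of F t, OF assms(1)] dV[of G t, OF assms(2)]])
  then have "((\<lambda>u. F t u \<bullet> G t u) has_real_derivative F t u \<bullet> Du G t u + Du F t u \<bullet> G t u) (at u)"
    by (simp add: has_real_derivative_iff_has_vector_derivative)
  from const_deriv[OF this assms(3)] show ?thesis unfolding Ds_def by (simp add: distrib_left[symmetric] inner_commute)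
qed

end


lemma onb3:
  fixes x T N :: "real^3"
  assumes "T \<bullet> T = 1" "N \<bullet> N = 1" "T \<bullet> N = 0"
  shows "x = (x \<bullet> T) *\<^sub>R T + (x \<bullet> N) *\<^sub>R N + (x \<bullet> cross3 T N) *\<^sub>R cross3 T N"
proof -
  have e: "T$1*T$1+T$2*T$2+T$3*T$3 = 1" "N$1*N$1+N$2*N$2+N$3*N$3 = 1" "T$1*N$1+T$2*N$2+T$3*N$3 = 0"
    using assms by (simp_all add: inner_vec_def sum_3)
  show ?thesis
    unfolding vec_eq_iff forall_3
    using e by (simp add: cross3_def inner_vec_def sum_3 algebra_simps) algebra
qed

context FF begin

lemma g_pos: "t \<in> I \<Longrightarrow> speed \<gamma> t u > 0" by (rule reg)
lemma k_pos: "t \<in> I \<Longrightarrow> curvature \<gamma> t u > 0" by (rule cp)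

lemma TT: "t \<in> I \<Longrightarrow> tangent \<gamma> t u \<bullet> tangent \<gamma> t u = 1"
proof -
  assume t: "t \<in> I"
  have g: "norm (Du \<gamma> t u) > 0" using reg[OF t, of u] by (simp add: speed_def)
  have "tangent \<gamma> t u \<bullet> tangent \<gamma> t u = inverse (norm (Du \<gamma> t u))^2 * (norm (Du \<gamma> t u))^2"
    unfolding T_eq speed_def power2_norm_eq_inner by (simp add: power2_eq_square)
  also have "\<dots> = 1" using g by (simp add: field_simps)
  finally show ?thesis .
qed

lemma DsT_kN: "t \<in> I \<Longrightarrow> Ds \<gamma> (tangent \<gamma>) t u = curvature \<gamma> t u *\<^sub>R normal \<gamma> t u"
  using cp[of t u] unfolding normal_def by simp

lemma NN: "t \<in> I \<Longrightarrow> normal \<gamma> t u \<bullet> normal \<gamma> t u = 1"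
proof -
  assume t: "t \<in> I"
  define Z where "Z = Ds \<gamma> (tangent \<gamma>) t u"
  have g: "norm Z > 0" using cp[OF t, of u] by (simp add: curvature_def Z_def)
  have "normal \<gamma> t u \<bullet> normal \<gamma> t u = inverse (norm Z)^2 * (norm Z)^2"
    unfolding normal_def curvature_def Z_def[symmetric] power2_norm_eq_inner by (simp add: power2_eq_square)
  also have "\<dots> = 1" using g by (simp add: field_simps)
  finally show ?thesis .
qed

lemma TN: "t \<in> I \<Longrightarrow> tangent \<gamma> t u \<bullet> normal \<gamma> t u = 0"
proof -
  assume t: "t \<in> I"
  have "Ds \<gamma> (tangent \<gamma>) t u \<bullet> tangent \<gamma> t u = 0"
    by (rule Ds_const_inner[of "tangent \<gamma>" t]) (use sm_T[OF t] TT[OF t] in auto)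
  then have "curvature \<gamma> t u * (normal \<gamma> t u \<bullet> tangent \<gamma> t u) = 0"
    using DsT_kN[OF t] by simp
  then show ?thesis using cp[OF t, of u] by (simp add: inner_commute)
qed

lemma B_def': "binormal \<gamma> = (\<lambda>t u. cross3 (tangent \<gamma> t u) (normal \<gamma> t u))"
  by (intro ext) (simp add: binormal_def)

lemma BT: "binormal \<gamma> t u \<bullet> tangent \<gamma> t u = 0"
  unfolding binormal_def by (simp add: dot_cross_self inner_commute)
lemma BN: "binormal \<gamma> t u \<bullet> normal \<gamma> t u = 0"
  unfolding binormal_def by (simp add: dot_cross_self inner_commute)
lemma BB: "t \<in> I \<Longrightarrow> binormal \<gamma> t u \<bullet> binormal \<gamma> t u = 1"
proof -
  assume t: "t \<in> I"
  have "(norm (binormal \<gamma> t u))^2 + (tangent \<gamma> t u \<bullet> normal \<gamma> t u)^2 = (norm (tangent \<gamma> t u) * norm (normal \<gamma> t u))^2"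
    unfolding binormal_def by (rule norm_cross_dot)
  moreover have "norm (tangent \<gamma> t u) = 1" "norm (normal \<gamma> t u) = 1"
    using TT[OF t, of u] NN[OF t, of u] by (simp_all add: norm_eq_1)
  ultimately show ?thesis using TN[OF t, of u] by (simp add: power2_norm_eq_inner)
qed

lemma DsN_T: "t \<in> I \<Longrightarrow> Ds \<gamma> (normal \<gamma>) t u \<bullet> tangent \<gamma> t u = - curvature \<gamma> t u"
proof -
  assume t: "t \<in> I"
  have "Ds \<gamma> (tangent \<gamma>) t u \<bullet> normal \<gamma> t u + tangent \<gamma> t u \<bullet> Ds \<gamma> (normal \<gamma>) t u = 0"
    by (rule Ds_orth_inner) (use sm_T[OF t] sm_N[OF t] TN[OF t] in auto)
  then show ?thesis using DsT_kN[OF t, of u] NN[OF t, of u] by (simp add: inner_commute)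
qed

lemma DsN_N: "t \<in> I \<Longrightarrow> Ds \<gamma> (normal \<gamma>) t u \<bullet> normal \<gamma> t u = 0"
  by (rule Ds_const_inner) (use sm_N NN in auto)

lemma DsN_eq: "t \<in> I \<Longrightarrow> Ds \<gamma> (normal \<gamma>) t u = (- curvature \<gamma> t u) *\<^sub>R tangent \<gamma> t u + torsion \<gamma> t u *\<^sub>R binormal \<gamma> t u"
proof -
  assume t: "t \<in> I"
  have "Ds \<gamma> (normal \<gamma>) t u = (Ds \<gamma> (normal \<gamma>) t u \<bullet> tangent \<gamma> t u) *\<^sub>R tangent \<gamma> t u
     + (Ds \<gamma> (normal \<gamma>) t u \<bullet> normal \<gamma> t u) *\<^sub>R normal \<gamma> t u
     + (Ds \<gamma> (normal \<gamma>) t u \<bullet> cross3 (tangent \<gamma> t u) (normal \<gamma> t u)) *\<^sub>R cross3 (tangent \<gamma> t u) (normal \<gamma> t u)"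
    by (rule onb3) (use TT[OF t] NN[OF t] TN[OF t] in auto)
  then show ?thesis using DsN_T[OF t, of u] DsN_N[OF t, of u]
    by (simp add: torsion_def binormal_def)
qed

lemma DsB_eq: "t \<in> I \<Longrightarrow> Ds \<gamma> (binormal \<gamma>) t u = (- torsion \<gamma> t u) *\<^sub>R normal \<gamma> t u"
proof -
  assume t: "t \<in> I"
  have "Ds \<gamma> (binormal \<gamma>) t u = cross3 (Ds \<gamma> (tangent \<gamma>) t u) (normal \<gamma> t u) + cross3 (tangent \<gamma> t u) (Ds \<gamma> (normal \<gamma>) t u)"
    unfolding B_def' by (rule Ds_cross) (use sm_T[OF t] sm_N[OF t] in auto)
  also have "\<dots> = torsion \<gamma> t u *\<^sub>R cross3 (tangent \<gamma> t u) (cross3 (tangent \<gamma> t u) (normal \<gamma> t u))"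
    unfolding DsT_kN[OF t] DsN_eq[OF t] binormal_def
    by (simp add: cross_mult_left cross_mult_right cross_add_right Cross3.right_diff_distrib)
  also have "\<dots> = (- torsion \<gamma> t u) *\<^sub>R normal \<gamma> t u"
    unfolding Lagrange using TT[OF t, of u] TN[OF t, of u] by simp
  finally show ?thesis .
qed

end


context FF begin

lemma Ds_cong: "(\<And>v. F t v = G t v) \<Longrightarrow> Ds \<gamma> F t u = Ds \<gamma> G t u"
proof -
  assume "\<And>v. F t v = G t v"
  then have "F t = G t" by auto
  then show ?thesis unfolding Ds_def Du_def by simp
qed

lemma frameB:
  assumes t: "t \<in> I" and a: "smR (\<lambda>u. a t u)" and b: "smR (\<lambda>u. b t u)" and c: "smR (\<lambda>u. c t u)"
  shows "Ds \<gamma> (\<lambda>t u. a t u *\<^sub>R tangent \<gamma> t u + b t u *\<^sub>R normal \<gamma> t u + c t u *\<^sub>R binormal \<gamma> t u) t u \<bullet> binormal \<gamma> t u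
     = Ds \<gamma> c t u + torsion \<gamma> t u * b t u"
proof -
  have sA: "smV (\<lambda>u. a t u *\<^sub>R tangent \<gamma> t u)" by (intro V_scale a sm_T t)
  have sB: "smV (\<lambda>u. b t u *\<^sub>R normal \<gamma> t u)" by (intro V_scale b sm_N t)
  have sC: "smV (\<lambda>u. c t u *\<^sub>R binormal \<gamma> t u)" by (intro V_scale c sm_B t)
  have "Ds \<gamma> (\<lambda>t u. a t u *\<^sub>R tangent \<gamma> t u + b t u *\<^sub>R normal \<gamma> t u + c t u *\<^sub>R binormal \<gamma> t u) t u
      = Ds \<gamma> (\<lambda>t u. a t u *\<^sub>R tangent \<gamma> t u + b t u *\<^sub>R normal \<gamma> t u) t u + Ds \<gamma> (\<lambda>t u. c t u *\<^sub>R binormal \<gamma> t u) t u"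
    by (rule Ds_add[of "\<lambda>t u. a t u *\<^sub>R tangent \<gamma> t u + b t u *\<^sub>R normal \<gamma> t u" t "\<lambda>t u. c t u *\<^sub>R binormal \<gamma> t u", simplified])
       (use sA sB sC in \<open>auto intro: V_add\<close>)
  also have "\<dots> = Ds \<gamma> (\<lambda>t u. a t u *\<^sub>R tangent \<gamma> t u) t u + Ds \<gamma> (\<lambda>t u. b t u *\<^sub>R normal \<gamma> t u) t u + Ds \<gamma> (\<lambda>t u. c t u *\<^sub>R binormal \<gamma> t u) t u"
    using Ds_add[of "\<lambda>t u. a t u *\<^sub>R tangent \<gamma> t u" t "\<lambda>t u. b t u *\<^sub>R normal \<gamma> t u", simplified] sA sB by simp
  also have "\<dots> = (Ds \<gamma> a t u *\<^sub>R tangent \<gamma> t u + a t u *\<^sub>R Ds \<gamma> (tangent \<gamma>) t u)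
     + (Ds \<gamma> b t u *\<^sub>R normal \<gamma> t u + b t u *\<^sub>R Ds \<gamma> (normal \<gamma>) t u)
     + (Ds \<gamma> c t u *\<^sub>R binormal \<gamma> t u + c t u *\<^sub>R Ds \<gamma> (binormal \<gamma>) t u)"
    using Ds_scale[of a t "tangent \<gamma>"] Ds_scale[of b t "normal \<gamma>"] Ds_scale[of c t "binormal \<gamma>"]
      a b c sm_T[OF t] sm_N[OF t] sm_B[OF t] by simp
  finally have e: "Ds \<gamma> (\<lambda>t u. a t u *\<^sub>R tangent \<gamma> t u + b t u *\<^sub>R normal \<gamma> t u + c t u *\<^sub>R binormal \<gamma> t u) t u = 
     (Ds \<gamma> a t u *\<^sub>R tangent \<gamma> t u + a t u *\<^sub>R Ds \<gamma> (tangent \<gamma>) t u)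
     + (Ds \<gamma> b t u *\<^sub>R normal \<gamma> t u + b t u *\<^sub>R Ds \<gamma> (normal \<gamma>) t u)
     + (Ds \<gamma> c t u *\<^sub>R binormal \<gamma> t u + c t u *\<^sub>R Ds \<gamma> (binormal \<gamma>) t u)" .
  show ?thesis unfolding e DsT_kN[OF t] DsN_eq[OF t] DsB_eq[OF t]
    using BT[of t u] BN[of t u] BB[OF t, of u]
    by (simp add: inner_add_left inner_commute algebra_simps)
qed

end


context FF begin

lemma sm_Dk: "t \<in> I \<Longrightarrow> smR (\<lambda>u. Ds \<gamma> (curvature \<gamma>) t u)" by (intro sm_DsR sm_k)
lemma sm_DDk: "t \<in> I \<Longrightarrow> smR (\<lambda>u. Ds \<gamma> (Ds \<gamma> (curvature \<gamma>)) t u)" by (intro sm_DsR sm_k)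
lemma sm_Dth: "t \<in> I \<Longrightarrow> smR (\<lambda>u. Ds \<gamma> \<theta> t u)" by (intro sm_DsR sm_th)
lemma sm_Dta: "t \<in> I \<Longrightarrow> smR (\<lambda>u. Ds \<gamma> (torsion \<gamma>) t u)" by (intro sm_DsR sm_tau)

lemma X_formula:
  assumes t: "t \<in> I"
  shows "Ds \<gamma> (Ds \<gamma> (Dt \<gamma>)) t u \<bullet> binormal \<gamma> t u =
    (let k = curvature \<gamma> t u; k1 = Ds \<gamma> (curvature \<gamma>) t u; k2 = Ds \<gamma> (Ds \<gamma> (curvature \<gamma>)) t u;
         th1 = Ds \<gamma> \<theta> t u; th2 = Ds \<gamma> (Ds \<gamma> \<theta>) t u; ta = torsion \<gamma> t u; ta1 = Ds \<gamma> (torsion \<gamma>) t u;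
         cs = cos (\<theta> t u); sn = sin (\<theta> t u) in
     k2 * sn + 2 * k1 * cs * th1 - k * sn * th1^2 + k * cs * th2 + 2 * ta * (k1 * cs - k * sn * th1) + k * cs * ta1 - ta^2 * k * sn)"
proof -
  define k where "k = curvature \<gamma>"
  define ta where "ta = torsion \<gamma>"
  define kc where "kc = (\<lambda>t u. k t u * cos (\<theta> t u))"
  define ks where "ks = (\<lambda>t u. k t u * sin (\<theta> t u))"
  have sk: "smR (\<lambda>u. k t u)" unfolding k_def by (rule sm_k[OF t])
  have sta: "smR (\<lambda>u. ta t u)" unfolding ta_def by (rule sm_tau[OF t])
  have skc: "smR (\<lambda>u. kc t u)" unfolding kc_def by (intro R_mult R_cos sk sm_th t)
  have sks: "smR (\<lambda>u. ks t u)" unfolding ks_def by (intro R_mult R_sin sk sm_th t)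
  have sDkc: "smR (\<lambda>u. Ds \<gamma> kc t u)" by (intro sm_DsR skc t)
  have sDks: "smR (\<lambda>u. Ds \<gamma> ks t u)" by (intro sm_DsR sks t)
  have S1: "Dt \<gamma> t v = kc t v *\<^sub>R normal \<gamma> t v + ks t v *\<^sub>R binormal \<gamma> t v" for v
    using fg[OF t, of v] unfolding kc_def ks_def k_def nu_def by (simp add: scaleR_add_right)
  define a1 where "a1 = (\<lambda>t u. - (kc t u * k t u))"
  define b1 where "b1 = (\<lambda>t u. Ds \<gamma> kc t u - ks t u * ta t u)"
  define c1 where "c1 = (\<lambda>t u. Ds \<gamma> ks t u + kc t u * ta t u)"
  have S2: "Ds \<gamma> (Dt \<gamma>) t v = a1 t v *\<^sub>R tangent \<gamma> t v + b1 t v *\<^sub>R normal \<gamma> t v + c1 t v *\<^sub>R binormal \<gamma> t v" for v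
  proof -
    have "Ds \<gamma> (Dt \<gamma>) t v = Ds \<gamma> (\<lambda>t u. kc t u *\<^sub>R normal \<gamma> t u + ks t u *\<^sub>R binormal \<gamma> t u) t v"
      by (rule Ds_cong) (rule S1)
    also have "\<dots> = Ds \<gamma> (\<lambda>t u. kc t u *\<^sub>R normal \<gamma> t u) t v + Ds \<gamma> (\<lambda>t u. ks t u *\<^sub>R binormal \<gamma> t u) t v"
      using Ds_add[of "\<lambda>t u. kc t u *\<^sub>R normal \<gamma> t u" t "\<lambda>t u. ks t u *\<^sub>R binormal \<gamma> t u"]
        V_scale[OF skc sm_N[OF t]] V_scale[OF sks sm_B[OF t]] by simp
    also have "\<dots> = (Ds \<gamma> kc t v *\<^sub>R normal \<gamma> t v + kc t v *\<^sub>R Ds \<gamma> (normal \<gamma>) t v)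
        + (Ds \<gamma> ks t v *\<^sub>R binormal \<gamma> t v + ks t v *\<^sub>R Ds \<gamma> (binormal \<gamma>) t v)"
      using Ds_scale[of kc t "normal \<gamma>"] Ds_scale[of ks t "binormal \<gamma>"] skc sks sm_N[OF t] sm_B[OF t] by simp
    also have "\<dots> = a1 t v *\<^sub>R tangent \<gamma> t v + b1 t v *\<^sub>R normal \<gamma> t v + c1 t v *\<^sub>R binormal \<gamma> t v"
      unfolding DsN_eq[OF t] DsB_eq[OF t] a1_def b1_def c1_def ta_def k_def
      by (simp add: algebra_simps)
    finally show ?thesis .
  qed
  have sa1: "smR (\<lambda>u. a1 t u)" unfolding a1_def using R_mult[OF R_const[of "-1"] R_mult[OF skc sk]] by simp
  have sb1: "smR (\<lambda>u. b1 t u)" unfolding b1_def by (intro R_diff R_mult sDkc sks sta)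
  have sc1: "smR (\<lambda>u. c1 t u)" unfolding c1_def by (intro R_add R_mult sDks skc sta)
  have S3: "Ds \<gamma> (Ds \<gamma> (Dt \<gamma>)) t u \<bullet> binormal \<gamma> t u = Ds \<gamma> c1 t u + ta t u * b1 t u"
  proof -
    have "Ds \<gamma> (Ds \<gamma> (Dt \<gamma>)) t u = Ds \<gamma> (\<lambda>t u. a1 t u *\<^sub>R tangent \<gamma> t u + b1 t u *\<^sub>R normal \<gamma> t u + c1 t u *\<^sub>R binormal \<gamma> t u) t u"
      by (rule Ds_cong) (rule S2)
    then show ?thesis using frameB[of t a1 b1 c1, OF t sa1 sb1 sc1] unfolding ta_def by simp
  qed
  have S4: "Ds \<gamma> c1 t u = Ds \<gamma> (Ds \<gamma> ks) t u + (Ds \<gamma> kc t u * ta t u + kc t u * Ds \<gamma> ta t u)"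
    unfolding c1_def
    using Ds_Radd[of "Ds \<gamma> ks" t "\<lambda>t u. kc t u * ta t u", OF sDks R_mult[OF skc sta]]
      Ds_mult[of kc t ta, OF skc sta] by simp
  have S5: "Ds \<gamma> ks t v = Ds \<gamma> k t v * sin (\<theta> t v) + k t v * (cos (\<theta> t v) * Ds \<gamma> \<theta> t v)" for v
    unfolding ks_def using Ds_mult[of k t "\<lambda>t u. sin (\<theta> t u)", OF sk R_sin[OF sm_th[OF t]]]
      Ds_sin[of \<theta> t, OF sm_th[OF t]] by simp
  have S5': "Ds \<gamma> kc t v = Ds \<gamma> k t v * cos (\<theta> t v) + k t v * (- sin (\<theta> t v) * Ds \<gamma> \<theta> t v)" for v
    unfolding kc_def using Ds_mult[of k t "\<lambda>t u. cos (\<theta> t u)", OF sk R_cos[OF sm_th[OF t]]]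
      Ds_cos[of \<theta> t, OF sm_th[OF t]] by simp
  have sDk: "smR (\<lambda>u. Ds \<gamma> k t u)" unfolding k_def by (rule sm_Dk[OF t])
  have sDth: "smR (\<lambda>u. Ds \<gamma> \<theta> t u)" by (rule sm_Dth[OF t])
  have S6: "Ds \<gamma> (Ds \<gamma> ks) t u = (Ds \<gamma> (Ds \<gamma> k) t u * sin (\<theta> t u) + Ds \<gamma> k t u * (cos (\<theta> t u) * Ds \<gamma> \<theta> t u))
      + (Ds \<gamma> k t u * (cos (\<theta> t u) * Ds \<gamma> \<theta> t u) + k t u * ((- sin (\<theta> t u) * Ds \<gamma> \<theta> t u) * Ds \<gamma> \<theta> t u + cos (\<theta> t u) * Ds \<gamma> (Ds \<gamma> \<theta>) t u))"
  proof -
    have "Ds \<gamma> (Ds \<gamma> ks) t u = Ds \<gamma> (\<lambda>t v. Ds \<gamma> k t v * sin (\<theta> t v) + k t v * (cos (\<theta> t v) * Ds \<gamma> \<theta> t v)) t u"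
      by (rule Ds_cong) (rule S5)
    also have "\<dots> = Ds \<gamma> (\<lambda>t v. Ds \<gamma> k t v * sin (\<theta> t v)) t u + Ds \<gamma> (\<lambda>t v. k t v * (cos (\<theta> t v) * Ds \<gamma> \<theta> t v)) t u"
      by (rule Ds_Radd[of "\<lambda>t v. Ds \<gamma> k t v * sin (\<theta> t v)" t "\<lambda>t v. k t v * (cos (\<theta> t v) * Ds \<gamma> \<theta> t v)", simplified])
         (intro R_mult R_sin R_cos sDk sk sDth sm_th t)+
    also have "Ds \<gamma> (\<lambda>t v. Ds \<gamma> k t v * sin (\<theta> t v)) t u = Ds \<gamma> (Ds \<gamma> k) t u * sin (\<theta> t u) + Ds \<gamma> k t u * (cos (\<theta> t u) * Ds \<gamma> \<theta> t u)"
      using Ds_mult[of "Ds \<gamma> k" t "\<lambda>t u. sin (\<theta> t u)", OF sDk R_sin[OF sm_th[OF t]]]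
        Ds_sin[of \<theta> t, OF sm_th[OF t]] by simp
    also have "Ds \<gamma> (\<lambda>t v. k t v * (cos (\<theta> t v) * Ds \<gamma> \<theta> t v)) t u =
        Ds \<gamma> k t u * (cos (\<theta> t u) * Ds \<gamma> \<theta> t u) + k t u * ((- sin (\<theta> t u) * Ds \<gamma> \<theta> t u) * Ds \<gamma> \<theta> t u + cos (\<theta> t u) * Ds \<gamma> (Ds \<gamma> \<theta>) t u)"
      using Ds_mult[of k t "\<lambda>t u. cos (\<theta> t u) * Ds \<gamma> \<theta> t u", OF sk R_mult[OF R_cos[OF sm_th[OF t]] sDth]]
        Ds_mult[of "\<lambda>t u. cos (\<theta> t u)" t "Ds \<gamma> \<theta>", OF R_cos[OF sm_th[OF t]] sDth]
        Ds_cos[of \<theta> t, OF sm_th[OF t]] by simp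
    finally show ?thesis .
  qed
  show ?thesis
    unfolding S3 S4 S6 b1_def S5'[of u] Let_def
    unfolding kc_def ks_def k_def ta_def
    by (simp add: power2_eq_square algebra_simps)
qed

end


lemma d_inv_norm:
  fixes p :: "real \<Rightarrow> real^3"
  assumes d: "(p has_vector_derivative q) (at x)" and nz: "p x \<noteq> 0"
  shows "((\<lambda>v. inverse (norm (p v))) has_real_derivative - (p x \<bullet> q) * inverse (norm (p x))^3) (at x)"
proof -
  have "((\<lambda>v. p v \<bullet> p v) has_vector_derivative p x \<bullet> q + q \<bullet> p x) (at x)"
    by (rule bounded_bilinear.has_vector_derivative[OF bounded_bilinear_inner d d])
  then have ip: "((\<lambda>v. p v \<bullet> p v) has_real_derivative 2 * (p x \<bullet> q)) (at x)"
    by (simp add: has_real_derivative_iff_has_vector_derivative inner_commute)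
  have pos: "0 < p x \<bullet> p x" using nz by simp
  have sq: "((\<lambda>v. sqrt (p v \<bullet> p v)) has_real_derivative inverse (sqrt (p x \<bullet> p x)) / 2 * (2 * (p x \<bullet> q))) (at x)"
    by (rule DERIV_chain2[OF DERIV_real_sqrt[OF pos] ip])
  have nz2: "sqrt (p x \<bullet> p x) \<noteq> 0" using pos by simp
  have "((\<lambda>v. inverse (sqrt (p v \<bullet> p v))) has_real_derivative
      - (inverse (sqrt (p x \<bullet> p x)) / 2 * (2 * (p x \<bullet> q)) * inverse (sqrt (p x \<bullet> p x) ^ Suc (Suc 0)))) (at x)"
    by (rule DERIV_inverse_fun[OF sq nz2])
  then show ?thesis
    unfolding norm_eq_sqrt_inner[symmetric]
    by (simp add: power3_eq_cube power2_eq_square field_simps)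
qed

lemma const_deriv_open:
  assumes "(f has_real_derivative d) (at x)" "open S" "x \<in> S" "\<And>y. y \<in> S \<Longrightarrow> f y = c"
  shows "d = 0"
proof -
  have "(f has_vector_derivative d) (at x)" using assms(1) by (simp add: has_real_derivative_iff_has_vector_derivative)
  then have "((\<lambda>y. c) has_vector_derivative d) (at x)"
    by (rule has_vector_derivative_transform_within_open[OF _ assms(2,3)]) (simp add: assms(4))
  moreover have "((\<lambda>y. c) has_vector_derivative 0) (at x)" by simp
  ultimately show ?thesis using vector_derivative_unique_at by blast
qed

context FF begin

lemma beta_eq: "t \<in> I \<Longrightarrow> beta \<gamma> \<theta> t u = cos (\<theta> t u) *\<^sub>R binormal \<gamma> t u - sin (\<theta> t u) *\<^sub>R normal \<gamma> t u"
proof -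
  assume t: "t \<in> I"
  have "cross3 (tangent \<gamma> t u) (binormal \<gamma> t u) = - normal \<gamma> t u"
    unfolding binormal_def Lagrange using TT[OF t, of u] TN[OF t, of u] by simp
  then show ?thesis unfolding beta_def nu_def
    by (simp add: cross_add_right cross_mult_right binormal_def[symmetric])
qed

lemma P_eq: "t \<in> I \<Longrightarrow> Du \<gamma> t v = speed \<gamma> t v *\<^sub>R tangent \<gamma> t v"
  unfolding T_eq using reg[of t v] by simp

lemma Q_eq: "t \<in> I \<Longrightarrow> Du (Du \<gamma>) t u = Du (speed \<gamma>) t u *\<^sub>R tangent \<gamma> t u
     + (speed \<gamma> t u)^2 *\<^sub>R (curvature \<gamma> t u *\<^sub>R normal \<gamma> t u)"
proof -
  assume t: "t \<in> I"
  have "((\<lambda>v. speed \<gamma> t v *\<^sub>R tangent \<gamma> t v) has_vector_derivative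
      speed \<gamma> t u *\<^sub>R Du (tangent \<gamma>) t u + Du (speed \<gamma>) t u *\<^sub>R tangent \<gamma> t u) (at u)"
    by (rule has_vector_derivative_scaleR[OF dR[of "speed \<gamma>" t, OF sm_g[OF t]] dV[of "tangent \<gamma>" t, OF sm_T[OF t]]])
  then have "((\<lambda>v. Du \<gamma> t v) has_vector_derivative
      speed \<gamma> t u *\<^sub>R Du (tangent \<gamma>) t u + Du (speed \<gamma>) t u *\<^sub>R tangent \<gamma> t u) (at u)"
    using P_eq[OF t] by simp
  then have "Du (Du \<gamma>) t u = speed \<gamma> t u *\<^sub>R Du (tangent \<gamma>) t u + Du (speed \<gamma>) t u *\<^sub>R tangent \<gamma> t u"
    unfolding Du_def[of "Du \<gamma>"] by (simp add: vector_derivative_at)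
  moreover have "Du (tangent \<gamma>) t u = speed \<gamma> t u *\<^sub>R (curvature \<gamma> t u *\<^sub>R normal \<gamma> t u)"
    using DsT_kN[OF t, of u] reg[OF t, of u] unfolding Ds_def
    by (metis (no_types, lifting) less_irrefl scaleR_scaleR right_inverse scaleR_one)
  ultimately show ?thesis by (simp add: power2_eq_square algebra_simps)
qed

lemma TB: "tangent \<gamma> t u \<bullet> binormal \<gamma> t u = 0" using BT by (simp add: inner_commute)
lemma NB: "normal \<gamma> t u \<bullet> binormal \<gamma> t u = 0" using BN by (simp add: inner_commute)
lemma NT: "t \<in> I \<Longrightarrow> normal \<gamma> t u \<bullet> tangent \<gamma> t u = 0" using TN by (simp add: inner_commute)

lemmas inner_lin = inner_add_left inner_add_right inner_diff_left inner_diff_right inner_scaleR_left inner_scaleR_right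
  inner_minus_left inner_minus_right

lemma QB: "t \<in> I \<Longrightarrow> Du (Du \<gamma>) t u \<bullet> binormal \<gamma> t u = 0"
  using Q_eq[of t u] by (simp only: inner_lin TB NB)

lemma PB: "t \<in> I \<Longrightarrow> Du \<gamma> t u \<bullet> binormal \<gamma> t u = 0"
  using P_eq[of t u] BT[of t u] by (simp add: inner_commute)

lemma Qbeta: "t \<in> I \<Longrightarrow> Du (Du \<gamma>) t u \<bullet> beta \<gamma> \<theta> t u = - ((speed \<gamma> t u)^2 * curvature \<gamma> t u * sin (\<theta> t u))"
  using Q_eq[of t u] beta_eq[of t u] by (simp only: inner_lin TB NB BT BN TN NT NN) simp

end


context FF begin

lemma t_part:
  assumes t0: "t0 \<in> I"
  shows "Dt (Dt \<gamma>) t0 u \<bullet> beta \<gamma> \<theta> t0 u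
    = Dt \<theta> t0 u * curvature \<gamma> t0 u + Ds \<gamma> (Ds \<gamma> (Dt \<gamma>)) t0 u \<bullet> binormal \<gamma> t0 u"
proof -
  define P where "P = (\<lambda>s. Du \<gamma> s u)"
  define Q where "Q = (\<lambda>s. Du (Du \<gamma>) s u)"
  define Pt where "Pt = Dt (Du \<gamma>) t0 u"
  define Qt where "Qt = Dt (Du (Du \<gamma>)) t0 u"
  have dP: "(P has_vector_derivative Pt) (at t0)"
    using smooth_dt[OF sg t0, of u "[False]"] unfolding P_def Pt_def by simp
  have dQ: "(Q has_vector_derivative Qt) (at t0)"
    using smooth_dt[OF sg t0, of u "[False,False]"] unfolding Q_def Qt_def by simp
  have Pnz: "P t0 \<noteq> 0" using reg[OF t0, of u] unfolding P_def speed_def by auto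
  define ig where "ig = (\<lambda>s. inverse (norm (P s)))"
  define dig0 where "dig0 = - (P t0 \<bullet> Pt) * inverse (norm (P t0))^3"
  have dig: "(ig has_real_derivative dig0) (at t0)"
    unfolding ig_def dig0_def by (rule d_inv_norm[OF dP Pnz])
  define cc where "cc = (\<lambda>s. - (P s \<bullet> Q s) * inverse (norm (P s))^3)"
  have cc_eq: "cc = (\<lambda>s. - (P s \<bullet> Q s) * (ig s * (ig s * ig s)))"
    unfolding cc_def ig_def by (simp add: power3_eq_cube mult.assoc)
  have "((\<lambda>s. P s \<bullet> Q s) has_vector_derivative P t0 \<bullet> Qt + Pt \<bullet> Q t0) (at t0)"
    by (rule bounded_bilinear.has_vector_derivative[OF bounded_bilinear_inner dP dQ])
  then have dPQ: "((\<lambda>s. P s \<bullet> Q s) has_real_derivative P t0 \<bullet> Qt + Pt \<bullet> Q t0) (at t0)"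
    by (simp add: has_real_derivative_iff_has_vector_derivative)
  obtain dcc where dcc: "(cc has_real_derivative dcc) (at t0)"
    unfolding cc_eq using DERIV_minus[OF DERIV_mult[OF dPQ DERIV_mult[OF dig DERIV_mult[OF dig dig]]]]
    by (metis (no_types, lifting) ext mult_minus_left)
  define E where "E = (\<lambda>s. ig s *\<^sub>R Q s + cc s *\<^sub>R P s)"
  define E' where "E' = (ig t0 *\<^sub>R Qt + dig0 *\<^sub>R Q t0) + (cc t0 *\<^sub>R Pt + dcc *\<^sub>R P t0)"
  have dE: "(E has_vector_derivative E') (at t0)"
    unfolding E_def E'_def
    by (intro has_vector_derivative_add has_vector_derivative_scaleR dig dQ dcc dP)
  have W_eq: "Du (tangent \<gamma>) s u = E s" if s: "s \<in> I" for s
  proof -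
    have dp: "((\<lambda>v. Du \<gamma> s v) has_vector_derivative Q s) (at u)"
      using smooth_du[OF sg s, of u "[False]"] unfolding Q_def by simp
    have pnz: "Du \<gamma> s u \<noteq> 0" using reg[OF s, of u] unfolding speed_def by auto
    have "((\<lambda>v. inverse (norm (Du \<gamma> s v)) *\<^sub>R Du \<gamma> s v) has_vector_derivative
        inverse (norm (Du \<gamma> s u)) *\<^sub>R Q s + (- (Du \<gamma> s u \<bullet> Q s) * inverse (norm (Du \<gamma> s u))^3) *\<^sub>R Du \<gamma> s u) (at u)"
      by (rule has_vector_derivative_scaleR[OF d_inv_norm[OF dp pnz] dp])
    then show ?thesis
      unfolding Du_def[of "tangent \<gamma>"] T_eq speed_def E_def ig_def cc_def P_def
      by (simp add: vector_derivative_at)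
  qed
  have dW: "((\<lambda>s. Du (tangent \<gamma>) s u) has_vector_derivative E') (at t0)"
    by (rule has_vector_derivative_transform_within_open[OF dE oI t0]) (simp add: W_eq)
  define Z where "Z = (\<lambda>s. Ds \<gamma> (tangent \<gamma>) s u)"
  have Z_eq: "Z = (\<lambda>s. ig s *\<^sub>R Du (tangent \<gamma>) s u)"
    unfolding Z_def ig_def P_def Ds_def speed_def by simp
  define Z' where "Z' = ig t0 *\<^sub>R E' + dig0 *\<^sub>R Du (tangent \<gamma>) t0 u"
  have dZ: "(Z has_vector_derivative Z') (at t0)"
    unfolding Z_eq Z'_def by (rule has_vector_derivative_scaleR[OF dig dW])
  have Znz: "Z t0 \<noteq> 0" using cp[OF t0, of u] unfolding Z_def curvature_def by auto
  define ik where "ik = (\<lambda>s. inverse (norm (Z s)))"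
  define dik0 where "dik0 = - (Z t0 \<bullet> Z') * inverse (norm (Z t0))^3"
  have dik: "(ik has_real_derivative dik0) (at t0)"
    unfolding ik_def dik0_def by (rule d_inv_norm[OF dZ Znz])
  have N_eq: "(\<lambda>s. normal \<gamma> s u) = (\<lambda>s. ik s *\<^sub>R Z s)"
    unfolding ik_def Z_def normal_def curvature_def by simp
  define N' where "N' = ik t0 *\<^sub>R Z' + dik0 *\<^sub>R Z t0"
  have dN: "((\<lambda>s. normal \<gamma> s u) has_vector_derivative N') (at t0)"
    unfolding N_eq N'_def by (rule has_vector_derivative_scaleR[OF dik dZ])
  have iknz: "ik t0 \<noteq> 0" using Znz unfolding ik_def by simp
  define dk0 where "dk0 = - (dik0 * inverse (ik t0 ^ Suc (Suc 0)))"
  have dk: "((\<lambda>s. curvature \<gamma> s u) has_real_derivative dk0) (at t0)"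
  proof -
    have "((\<lambda>s. inverse (ik s)) has_real_derivative dk0) (at t0)"
      unfolding dk0_def by (rule DERIV_inverse_fun[OF dik iknz])
    moreover have "(\<lambda>s. inverse (ik s)) = (\<lambda>s. curvature \<gamma> s u)"
      unfolding ik_def Z_def curvature_def by simp
    ultimately show ?thesis by simp
  qed
  define T' where "T' = ig t0 *\<^sub>R Pt + dig0 *\<^sub>R P t0"
  have dT: "((\<lambda>s. tangent \<gamma> s u) has_vector_derivative T') (at t0)"
  proof -
    have "((\<lambda>s. ig s *\<^sub>R P s) has_vector_derivative T') (at t0)"
      unfolding T'_def by (rule has_vector_derivative_scaleR[OF dig dP])
    moreover have "(\<lambda>s. ig s *\<^sub>R P s) = (\<lambda>s. tangent \<gamma> s u)"
      unfolding ig_def P_def T_eq speed_def by simp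
    ultimately show ?thesis by simp
  qed
  define B' where "B' = cross3 (tangent \<gamma> t0 u) N' + cross3 T' (normal \<gamma> t0 u)"
  have dB: "((\<lambda>s. binormal \<gamma> s u) has_vector_derivative B') (at t0)"
    unfolding B'_def binormal_def by (rule bounded_bilinear.has_vector_derivative[OF bb_cross dT dN])
  define tht where "tht = Dt \<theta> t0 u"
  have dth: "((\<lambda>s. \<theta> s u) has_real_derivative tht) (at t0)"
    using smooth_dt[OF sth t0, of u "[]"] unfolding tht_def
    by (simp add: has_real_derivative_iff_has_vector_derivative)
  define nu' where "nu' = (cos (\<theta> t0 u) *\<^sub>R N' + (- sin (\<theta> t0 u) * tht) *\<^sub>R normal \<gamma> t0 u)
      + (sin (\<theta> t0 u) *\<^sub>R B' + (cos (\<theta> t0 u) * tht) *\<^sub>R binormal \<gamma> t0 u)"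
  have dnu: "((\<lambda>s. nu \<gamma> \<theta> s u) has_vector_derivative nu') (at t0)"
    unfolding nu_def nu'_def
    by (rule has_vector_derivative_add[OF has_vector_derivative_scaleR[OF DERIV_fun_cos[OF dth] dN]
                                         has_vector_derivative_scaleR[OF DERIV_fun_sin[OF dth] dB]])
  define V' where "V' = curvature \<gamma> t0 u *\<^sub>R nu' + dk0 *\<^sub>R nu \<gamma> \<theta> t0 u"
  have dV: "((\<lambda>s. curvature \<gamma> s u *\<^sub>R nu \<gamma> \<theta> s u) has_vector_derivative V') (at t0)"
    unfolding V'_def by (rule has_vector_derivative_scaleR[OF dk dnu])
  have dDt: "((\<lambda>s. Dt \<gamma> s u) has_vector_derivative V') (at t0)"
    by (rule has_vector_derivative_transform_within_open[OF dV oI t0]) (simp add: fg)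
  have DDt: "Dt (Dt \<gamma>) t0 u = V'"
    unfolding Dt_def[of "Dt \<gamma>"] using dDt by (simp add: vector_derivative_at)
  have NpN: "N' \<bullet> normal \<gamma> t0 u = 0"
  proof -
    have "((\<lambda>s. normal \<gamma> s u \<bullet> normal \<gamma> s u) has_vector_derivative normal \<gamma> t0 u \<bullet> N' + N' \<bullet> normal \<gamma> t0 u) (at t0)"
      by (rule bounded_bilinear.has_vector_derivative[OF bounded_bilinear_inner dN dN])
    then have "((\<lambda>s. normal \<gamma> s u \<bullet> normal \<gamma> s u) has_real_derivative normal \<gamma> t0 u \<bullet> N' + N' \<bullet> normal \<gamma> t0 u) (at t0)"
      by (simp add: has_real_derivative_iff_has_vector_derivative)
    from const_deriv_open[OF this oI t0, of 1] NN show ?thesis by (simp add: inner_commute)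
  qed
  have BpB: "B' \<bullet> binormal \<gamma> t0 u = 0"
  proof -
    have "((\<lambda>s. binormal \<gamma> s u \<bullet> binormal \<gamma> s u) has_vector_derivative binormal \<gamma> t0 u \<bullet> B' + B' \<bullet> binormal \<gamma> t0 u) (at t0)"
      by (rule bounded_bilinear.has_vector_derivative[OF bounded_bilinear_inner dB dB])
    then have "((\<lambda>s. binormal \<gamma> s u \<bullet> binormal \<gamma> s u) has_real_derivative binormal \<gamma> t0 u \<bullet> B' + B' \<bullet> binormal \<gamma> t0 u) (at t0)"
      by (simp add: has_real_derivative_iff_has_vector_derivative)
    from const_deriv_open[OF this oI t0, of 1] BB show ?thesis by (simp add: inner_commute)
  qed
  have BpN: "B' \<bullet> normal \<gamma> t0 u = - (N' \<bullet> binormal \<gamma> t0 u)"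
  proof -
    have "((\<lambda>s. normal \<gamma> s u \<bullet> binormal \<gamma> s u) has_vector_derivative normal \<gamma> t0 u \<bullet> B' + N' \<bullet> binormal \<gamma> t0 u) (at t0)"
      by (rule bounded_bilinear.has_vector_derivative[OF bounded_bilinear_inner dN dB])
    then have "((\<lambda>s. normal \<gamma> s u \<bullet> binormal \<gamma> s u) has_real_derivative normal \<gamma> t0 u \<bullet> B' + N' \<bullet> binormal \<gamma> t0 u) (at t0)"
      by (simp add: has_real_derivative_iff_has_vector_derivative)
    from const_deriv_open[OF this oI t0, of 0] NB show ?thesis by (simp add: inner_commute)
  qed
  have nubeta: "nu \<gamma> \<theta> t0 u \<bullet> beta \<gamma> \<theta> t0 u = 0"
    unfolding beta_def by (rule dot_cross_self(2))
  have nu'beta: "nu' \<bullet> beta \<gamma> \<theta> t0 u = tht + N' \<bullet> binormal \<gamma> t0 u"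
  proof -
    have "nu' \<bullet> beta \<gamma> \<theta> t0 u = ((cos (\<theta> t0 u))^2 + (sin (\<theta> t0 u))^2) * (tht + N' \<bullet> binormal \<gamma> t0 u)"
      unfolding nu'_def beta_eq[OF t0]
      apply (simp only: inner_lin NN[OF t0] BB[OF t0] NB BN NpN BpB BpN)
      apply (simp add: inner_commute[of _ B'] BpN power2_eq_square algebra_simps)
      apply (insert sin_cos_squared_add[of "\<theta> t0 u"])
      apply algebra
      done
    then show ?thesis by simp
  qed
  define R where "R = (\<lambda>v. Du (Dt \<gamma>) t0 v)"
  define R' where "R' = Du (Du (Dt \<gamma>)) t0 u"
  have sw1: "Pt = R u" unfolding Pt_def R_def by (rule schwarz[OF sg oI cI t0])
  have sw1': "\<And>v. Dt (Du \<gamma>) t0 v = Du (Dt \<gamma>) t0 v" by (rule schwarz[OF sg oI cI t0])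
  have sw2: "Qt = R'"
  proof -
    have "Dt (Du (Du \<gamma>)) t0 u = Du (Dt (Du \<gamma>)) t0 u"
      using schwarz[OF smooth_iterD[OF sg, of "[False]"] oI cI t0, of u] by simp
    also have "\<dots> = Du (Du (Dt \<gamma>)) t0 u"
    proof -
      have "Dt (Du \<gamma>) t0 = Du (Dt \<gamma>) t0" by (rule ext) (rule sw1')
      then show ?thesis unfolding Du_def[of "Dt (Du \<gamma>)"] Du_def[of "Du (Dt \<gamma>)"] by simp
    qed
    finally show ?thesis unfolding Qt_def R'_def .
  qed
  have Xf: "Ds \<gamma> (Ds \<gamma> (Dt \<gamma>)) t0 u \<bullet> binormal \<gamma> t0 u
      = ig t0 * (ig t0 * (R' \<bullet> binormal \<gamma> t0 u) + cc t0 * (R u \<bullet> binormal \<gamma> t0 u))"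
  proof -
    have dp0: "((\<lambda>v. Du \<gamma> t0 v) has_vector_derivative Q t0) (at u)"
      using smooth_du[OF sg t0, of u "[False]"] unfolding Q_def by simp
    have dR: "(R has_vector_derivative R') (at u)"
      using smooth_du[OF sg t0, of u "[False, True]"] unfolding R_def R'_def by simp
    have pnz: "Du \<gamma> t0 u \<noteq> 0" using Pnz unfolding P_def .
    have "((\<lambda>v. inverse (norm (Du \<gamma> t0 v)) *\<^sub>R R v) has_vector_derivative
        inverse (norm (Du \<gamma> t0 u)) *\<^sub>R R' + (- (Du \<gamma> t0 u \<bullet> Q t0) * inverse (norm (Du \<gamma> t0 u))^3) *\<^sub>R R u) (at u)"
      by (rule has_vector_derivative_scaleR[OF d_inv_norm[OF dp0 pnz] dR])
    moreover have "(\<lambda>v. inverse (norm (Du \<gamma> t0 v)) *\<^sub>R R v) = (\<lambda>v. Ds \<gamma> (Dt \<gamma>) t0 v)"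
      unfolding R_def Ds_def speed_def by simp
    ultimately have "Ds \<gamma> (Ds \<gamma> (Dt \<gamma>)) t0 u = ig t0 *\<^sub>R (ig t0 *\<^sub>R R' + cc t0 *\<^sub>R R u)"
      unfolding Ds_eq[of "Ds \<gamma> (Dt \<gamma>)"] ig_def cc_def P_def speed_def
      by (simp add: vector_derivative_at)
    then show ?thesis by (simp only: inner_lin)
  qed
  have EB: "E t0 \<bullet> binormal \<gamma> t0 u = 0"
    unfolding E_def using QB[OF t0, of u] PB[OF t0, of u] unfolding P_def Q_def by (simp add: inner_lin)
  have N'B: "N' \<bullet> binormal \<gamma> t0 u = ik t0 * (ig t0 * (ig t0 * (Qt \<bullet> binormal \<gamma> t0 u) + cc t0 * (Pt \<bullet> binormal \<gamma> t0 u)))"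
  proof -
    have ZB: "Z t0 \<bullet> binormal \<gamma> t0 u = 0" unfolding Z_def DsT_kN[OF t0] by (simp add: NB)
    have WB: "Du (tangent \<gamma>) t0 u \<bullet> binormal \<gamma> t0 u = 0" using W_eq[OF t0] EB by simp
    show ?thesis unfolding N'_def Z'_def E'_def
      using ZB WB QB[OF t0, of u] PB[OF t0, of u] unfolding P_def Q_def
      by (simp only: inner_lin) simp
  qed
  have kik: "curvature \<gamma> t0 u * ik t0 = 1"
    using Znz unfolding ik_def Z_def curvature_def by simp
  have "Dt (Dt \<gamma>) t0 u \<bullet> beta \<gamma> \<theta> t0 u = curvature \<gamma> t0 u * (tht + N' \<bullet> binormal \<gamma> t0 u)"
    unfolding DDt V'_def by (simp only: inner_lin nubeta nu'beta)
  also have "\<dots> = tht * curvature \<gamma> t0 u + (curvature \<gamma> t0 u * ik t0) * (ig t0 * (ig t0 * (Qt \<bullet> binormal \<gamma> t0 u) + cc t0 * (Pt \<bullet> binormal \<gamma> t0 u)))"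
    unfolding N'B by (simp add: algebra_simps)
  also have "\<dots> = tht * curvature \<gamma> t0 u + Ds \<gamma> (Ds \<gamma> (Dt \<gamma>)) t0 u \<bullet> binormal \<gamma> t0 u"
    unfolding kik Xf sw1 sw2 by simp
  finally show ?thesis unfolding tht_def .
qed

end


lemma matrix_inv_eqI:
  fixes A M :: "real^'n^'n"
  assumes "A ** M = mat 1" "M ** A = mat 1"
  shows "matrix_inv A = M"
proof -
  have ex: "\<exists>A'. A ** A' = mat 1 \<and> A' ** A = mat 1" using assms by blast
  define A' where "A' = matrix_inv A"
  have h: "A ** A' = mat 1 \<and> A' ** A = mat 1"
    unfolding A'_def matrix_inv_def using someI_ex[OF ex] by blast
  have "A' = A' ** (A ** M)" using assms by (simp add: matrix_mul_rid)
  also have "\<dots> = (A' ** A) ** M" by (simp add: matrix_mul_assoc)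
  also have "\<dots> = M" using h by (simp add: matrix_mul_lid)
  finally show ?thesis unfolding A'_def .
qed

lemma trace_diag_inv:
  fixes a b p q r w :: real
  assumes "a \<noteq> 0" "b \<noteq> 0"
  shows "trace (vector [vector [p, q], vector [r, w]] ** matrix_inv (vector [vector [a, 0], vector [0, b]] :: real^2^2)) = p/a + w/b"
proof -
  have "matrix_inv (vector [vector [a, 0], vector [0, b]] :: real^2^2) = vector [vector [1/a, 0], vector [0, 1/b]]"
    apply (rule matrix_inv_eqI)
    using assms by (auto simp: matrix_matrix_mult_def mat_def vec_eq_iff forall_2 sum_2)
  then show ?thesis by (simp add: trace_def sum_2 matrix_matrix_mult_def divide_inverse)
qed

lemma final_alg:
  fixes k g H sn cs k1 k2 th1 th2 ta ta1 :: real
  assumes k: "k > 0" and g: "g > 0"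
  shows "(- (g^2 * k * sn)) / g^2 +
     ((k * H - (k * (ta1 + th2) + 2 * k1 * (ta + th1)) * k powi (-2) * (k * cs)
       + (k ^ 3 + k * (ta + th1) ^ 2 - k2) * k powi (-2) * (k * sn)) * k +
      (k2 * sn + 2 * k1 * cs * th1 - k * sn * th1^2 + k * cs * th2 + 2 * ta * (k1 * cs - k * sn * th1) + k * cs * ta1 - ta^2 * k * sn)) / k^2 = H"
proof -
  have p: "k powi (-2) = inverse (k^2)" by (simp add: power_int_minus)
  show ?thesis unfolding p using k g by (simp add: field_simps power2_eq_square power3_eq_cube)
qed

theorem mainTheorem16:
  fixes H tbar :: real and \<gamma> :: "real \<Rightarrow> real \<Rightarrow> real^3" and \<theta> :: "real \<Rightarrow> real \<Rightarrow> real"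
  assumes tbar: "tbar > 0"
    and smooth_gamma: "smooth_on2 {0<..<tbar} UNIV \<gamma>"
    and smooth_theta: "smooth_on2 {0<..<tbar} UNIV \<theta>"
    and closed_gamma: "\<forall>t\<in>{0<..<tbar}. \<forall>u. \<gamma> t (u + 2 * pi) = \<gamma> t u"
    and closed_theta: "\<forall>t\<in>{0<..<tbar}. \<forall>u. cos (\<theta> t (u + 2 * pi)) = cos (\<theta> t u) \<and>
                                           sin (\<theta> t (u + 2 * pi)) = sin (\<theta> t u)"
    and regular: "\<forall>t\<in>{0<..<tbar}. \<forall>u. speed \<gamma> t u > 0"
    and curv_pos: "\<forall>t\<in>{0<..<tbar}. \<forall>u. curvature \<gamma> t u > 0"
    and flow_gamma: "\<forall>t\<in>{0<..<tbar}. \<forall>u. Dt \<gamma> t u = curvature \<gamma> t u *\<^sub>R nu \<gamma> \<theta> t u"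
    and flow_theta: "\<forall>t\<in>{0<..<tbar}. \<forall>u. Dt \<theta> t u = upsilon H \<gamma> \<theta> t u"
  shows "\<forall>t\<in>{0<..<tbar}. \<forall>u. mean_curvature \<gamma> (beta \<gamma> \<theta>) t u = H"
proof (intro ballI allI)
  fix t u assume t: "t \<in> {0<..<tbar}"
  interpret FF \<gamma> \<theta> "{0<..<tbar}"
    by unfold_locales (use smooth_gamma smooth_theta regular curv_pos flow_gamma in \<open>auto simp: convex_real_interval\<close>)
  define k where "k = curvature \<gamma> t u"
  define g where "g = speed \<gamma> t u"
  have kp: "k > 0" unfolding k_def by (rule cp[OF t])
  have gp: "g > 0" unfolding g_def by (rule reg[OF t])
  have Tnu: "tangent \<gamma> t u \<bullet> nu \<gamma> \<theta> t u = 0"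
    unfolding nu_def by (simp add: inner_lin TN[OF t] TB)
  have nunu: "nu \<gamma> \<theta> t u \<bullet> nu \<gamma> \<theta> t u = 1"
  proof -
    have "nu \<gamma> \<theta> t u \<bullet> nu \<gamma> \<theta> t u = (cos (\<theta> t u))^2 + (sin (\<theta> t u))^2"
      unfolding nu_def by (simp add: inner_lin NN[OF t] BB[OF t] NB BN power2_eq_square)
    then show ?thesis by simp
  qed
  have PV: "Du \<gamma> t u \<bullet> Dt \<gamma> t u = 0"
    unfolding P_eq[OF t] fg[OF t] by (simp add: inner_lin Tnu)
  have VP: "Dt \<gamma> t u \<bullet> Du \<gamma> t u = 0" using PV by (simp add: inner_commute)
  have PP: "Du \<gamma> t u \<bullet> Du \<gamma> t u = g^2"
    unfolding g_def speed_def by (simp add: power2_norm_eq_inner)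
  have VV: "Dt \<gamma> t u \<bullet> Dt \<gamma> t u = k^2"
    unfolding fg[OF t] k_def by (simp add: inner_lin nunu power2_eq_square)
  have FFf: "first_ff \<gamma> t u = vector [vector [g^2, 0], vector [0, k^2]]"
    unfolding first_ff_def PV VP PP VV ..
  have mc: "mean_curvature \<gamma> (beta \<gamma> \<theta>) t u =
     (Du (Du \<gamma>) t u \<bullet> beta \<gamma> \<theta> t u) / g^2 + (Dt (Dt \<gamma>) t u \<bullet> beta \<gamma> \<theta> t u) / k^2"
    unfolding mean_curvature_def FFf second_ff_def
    by (rule trace_diag_inv) (use kp gp in auto)
  have psi3_eq: "Ds \<gamma> (psi3 \<gamma> \<theta>) t u = Ds \<gamma> (torsion \<gamma>) t u + Ds \<gamma> (Ds \<gamma> \<theta>) t u"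
  proof -
    have "psi3 \<gamma> \<theta> = (\<lambda>t u. torsion \<gamma> t u + Ds \<gamma> \<theta> t u)" by (intro ext) (simp add: psi3_def)
    then show ?thesis using Ds_Radd[of "torsion \<gamma>" t "Ds \<gamma> \<theta>", OF sm_tau[OF t] sm_Dth[OF t]] by simp
  qed
  have ups: "Dt \<theta> t u = upsilon H \<gamma> \<theta> t u" using flow_theta t by blast
  show "mean_curvature \<gamma> (beta \<gamma> \<theta>) t u = H"
    unfolding mc Qbeta[OF t] t_part[OF t] X_formula[OF t] ups upsilon_def psi3_eq Let_def
      psi1_def psi2_def psi3_def k_def[symmetric] g_def[symmetric]
    by (rule final_alg[OF kp gp])
qed


end
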